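(* Let $D \ge 1$, $x \in [0,1]^D$, and $s_d = 2^d$ for $d = 0, \ldots, D-1$. Consider the following procedure: initialize the lists $\mathtt{indices} = [0]$ and $\mathtt{weights} = [1]$; for $d = 0$ to $D-1$, and for each $k = 0$ to $2^d - 1$ (in this order): append $s_d + \mathtt{indices}[k]$ to $\mathtt{indices}$, append $x[d]\cdot \mathtt{weights}[k]$ to $\mathtt{weights}$, and then replace $\mathtt{weights}[k]$ by $(1 - x[d])\cdot \mathtt{weights}[k]$; finally return $\mathtt{indices}$ and $\mathtt{weights}$. Then the returned lists each have length $2^D$ and, for every $k = 0, 1, \ldots, 2^D - 1$ (lists indexed from $0$), $$\mathtt{indices}[k] = \sum_{d=0}^{D-1} \mathrm{bit}_d(k)\, s_d, \qquad \mathtt{weights}[k] = \prod_{d=0}^{D-1}\Big( (1 - \mathrm{bit}_d(k))(1 - x[d]) + \mathrm{bit}_d(k)\, x[d] \Big),$$ where $\mathrm{bit}_d(k) \in \{0,1\}$ is the $d$th bit of the binary expansion of $k$. That is, the procedure returns the indices of the $2^D$ vertices of the unit cell $[0,1]^D$ (vertex $v \in \{0,1\}^D$ indexed by $\sum_d v[d] 2^d$) together with their multilinear interpolation weights at $x$.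
   Context: $x[d]$ denotes the $d$th coordinate of $x$ (coordinates indexed $0,\ldots,D-1$). The lattice parameters of a $2^D$ lattice are indexed so that the vertex $v\in\{0,1\}^D$ has index $\sum_d v[d]2^d$; thus $s_d = 2^d$ is the difference of indices of two vertices adjacent in the $d$th dimension. The multilinear interpolation weight of vertex $v$ at $x$ is $\prod_d x[d]^{v[d]}(1-x[d])^{1-v[d]}$. Lists are appended to at the end, and the index $k$ in the inner loop refers to positions $0,\ldots,2^d-1$ of the lists as they stand. *)

theory Defs
  imports Complex_Main
begin

definition inner_step :: "(nat \<Rightarrow> real) \<Rightarrow> nat \<Rightarrow> nat \<Rightarrow> nat list \<times> real list \<Rightarrow> nat list \<times> real list" where
  "inner_step x d k st =
     (let ind = fst st; w = snd st;
          ind' = ind @ [2 ^ d + ind ! k];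
          w' = w @ [x d * w ! k];
          w'' = w'[k := (1 - x d) * w' ! k]
      in (ind', w''))"

definition outer_step :: "(nat \<Rightarrow> real) \<Rightarrow> nat \<Rightarrow> nat list \<times> real list \<Rightarrow> nat list \<times> real list" where
  "outer_step x d st = fold (inner_step x d) [0..<2 ^ d] st"

definition cell_vertices :: "nat \<Rightarrow> (nat \<Rightarrow> real) \<Rightarrow> nat list \<times> real list" where
  "cell_vertices D x = fold (outer_step x) [0..<D] ([0], [1])"

definition bit_d :: "nat \<Rightarrow> nat \<Rightarrow> nat" where
  "bit_d d k = (k div 2 ^ d) mod 2"

end

theory Submission
  imports Defs
begin

lemma inner_fold:
  assumes "j \<le> length W" "length I = length W"
  shows "fold (inner_step x d) [0..<j] (I, W) =
    (I @ map (\<lambda>i. 2^d + I!i) [0..<j],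
     map (\<lambda>i. (1 - x d) * W!i) [0..<j] @ drop j W @ map (\<lambda>i. x d * W!i) [0..<j])"
  using assms
proof (induction j)
  case 0
  then show ?case by simp
next
  case (Suc j)
  then have IH: "fold (inner_step x d) [0..<j] (I, W) =
    (I @ map (\<lambda>i. 2^d + I!i) [0..<j],
     map (\<lambda>i. (1 - x d) * W!i) [0..<j] @ drop j W @ map (\<lambda>i. x d * W!i) [0..<j])" by simp
  have jl: "j < length W" using Suc by simp
  have jj: "j < Suc (j + length W - Suc 0)" using jl by simp
  have dr: "drop j W = W!j # drop (Suc j) W" using jl by (simp add: Cons_nth_drop_Suc)
  have "fold (inner_step x d) [0..<Suc j] (I, W) = inner_step x d j (fold (inner_step x d) [0..<j] (I, W))"
    by simp
  also have "\<dots> = inner_step x d j (I @ map (\<lambda>i. 2^d + I!i) [0..<j],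
     map (\<lambda>i. (1 - x d) * W!i) [0..<j] @ drop j W @ map (\<lambda>i. x d * W!i) [0..<j])"
    by (simp only: IH)
  also have "\<dots> = (I @ map (\<lambda>i. 2^d + I!i) [0..<Suc j], map (\<lambda>i. (1 - x d) * W!i) [0..<Suc j] @ drop (Suc j) W @ map (\<lambda>i. x d * W!i) [0..<Suc j])"
    using jl Suc.prems jj
    by (simp add: inner_step_def Let_def dr nth_append list_update_append)
  finally show ?case .
qed

lemma outer:
  assumes "length I = 2^d" "length W = 2^d"
  shows "outer_step x d (I, W) =
    (I @ map (\<lambda>i. 2^d + I!i) [0..<2^d],
     map (\<lambda>i. (1 - x d) * W!i) [0..<2^d] @ map (\<lambda>i. x d * W!i) [0..<2^d])"
  using inner_fold[of "2^d" W I x d] assms by (simp add: outer_step_def)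

lemma bit_low: "k < 2^D \<Longrightarrow> bit_d D k = 0"
  by (simp add: bit_d_def)

lemma bit_high: "i < 2^D \<Longrightarrow> bit_d D (2^D + i) = 1"
  by (simp add: bit_d_def)

lemma bit_high2: "i < 2^D \<Longrightarrow> d < D \<Longrightarrow> bit_d d (2^D + i) = bit_d d i"
proof -
  assume "i < 2^D" "d < D"
  then obtain e where e: "D = d + e" "e > 0" by (metis less_imp_add_positive)
  have "(2^D + i) div 2^d = 2^e + i div 2^d"
    by (simp add: e power_add)
  moreover have "(2::nat)^e = 2 * 2^(e-1)" using e by (cases e) auto
  ultimately show ?thesis unfolding bit_d_def by simp
qed

lemma bit_high': "i < 2^D \<Longrightarrow> bit_d D (i + 2^D) = 1"
  using bit_high by (simp add: add.commute)
lemma bit_high2': "i < 2^D \<Longrightarrow> d < D \<Longrightarrow> bit_d d (i + 2^D) = bit_d d i"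
  using bit_high2 by (simp add: add.commute)

lemma sum_hi: "i < 2^D \<Longrightarrow> (\<Sum>d<D. bit_d d (2^D+i) * 2^d) = (\<Sum>d<D. bit_d d i * (2::nat)^d)"
  by (rule sum.cong) (auto simp: bit_high2)
lemma prod_hi: "i < 2^D \<Longrightarrow> (\<Prod>d<D. (1 - real (bit_d d (2^D+i))) * (1 - x d) + real (bit_d d (2^D+i)) * x d)
   = (\<Prod>d<D. (1 - real (bit_d d i)) * (1 - x d) + real (bit_d d i) * x d)"
  by (rule prod.cong) (auto simp: bit_high2)

lemma main:
  "cell_vertices D x =
    (map (\<lambda>k. \<Sum>d<D. bit_d d k * 2 ^ d) [0..<2^D],
     map (\<lambda>k. \<Prod>d<D. (1 - real (bit_d d k)) * (1 - x d) + real (bit_d d k) * x d) [0..<2^D])"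
proof (induction D)
  case 0
  then show ?case by (simp add: cell_vertices_def)
next
  case (Suc D)
  have cv: "cell_vertices (Suc D) x = outer_step x D (cell_vertices D x)"
    by (simp add: cell_vertices_def)
  have ex: "[0..<2^Suc D] = [0..<2^D] @ map (\<lambda>i. 2^D + i) [0..<2^D]"
  proof -
    have "[0..<2^Suc D] = [0..<2^D] @ [2^D..<2^D + 2^D]"
      using upt_add_eq_append[of 0 "2^D" "2^D"] by (simp add: mult_2)
    moreover have "map (\<lambda>i. 2^D + i) [0..<2^D] = [2^D..<2^D + 2^D]"
      using map_add_upt[of "2^D" "2^D"] by (simp add: add.commute)
    ultimately show ?thesis by simp
  qed
  let ?A = "[0..<2^D]"
  have ex2: "[0..<2*2^D] = ?A @ map (\<lambda>i. 2^D + i) ?A" using ex by simp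
  have e1: "map (\<lambda>i. 2 ^ D + map (\<lambda>k. \<Sum>d<D. bit_d d k * 2 ^ d) ?A ! i) ?A
      = map (\<lambda>k. \<Sum>d<Suc D. bit_d d k * 2 ^ d) (map (\<lambda>i. 2^D + i) ?A)"
    by (rule nth_equalityI) (simp_all add: bit_high2 bit_high bit_high2' bit_high' sum_hi)
  have e2: "map (\<lambda>k. \<Sum>d<D. bit_d d k * 2 ^ d) ?A
      = map (\<lambda>k. \<Sum>d<Suc D. bit_d d k * 2 ^ d) ?A"
    by (rule nth_equalityI) (simp_all add: bit_low)
  let ?P = "\<lambda>D k. \<Prod>d<D. (1 - real (bit_d d k)) * (1 - x d) + real (bit_d d k) * x d"
  have e3: "map (\<lambda>i. (1 - x D) * map (?P D) ?A ! i) ?A = map (?P (Suc D)) ?A"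
    by (rule nth_equalityI) (simp_all add: bit_low mult.commute)
  have e4: "map (\<lambda>i. x D * map (?P D) ?A ! i) ?A = map (?P (Suc D)) (map (\<lambda>i. 2^D + i) ?A)"
    by (rule nth_equalityI) (simp_all add: bit_high2 bit_high bit_high2' bit_high' prod_hi mult.commute)
  show ?case
    unfolding cv Suc.IH
    apply (subst outer, simp, simp)
    apply (simp only: power_Suc ex2 map_append e1 e4)
    apply (simp only: e2 e3)
    done
qed

theorem lemma2:
  fixes D :: nat and x :: "nat \<Rightarrow> real"
  assumes "D \<ge> 1"
    and "\<And>d. d < D \<Longrightarrow> 0 \<le> x d \<and> x d \<le> 1"
  shows "length (fst (cell_vertices D x)) = 2 ^ D
       \<and> length (snd (cell_vertices D x)) = 2 ^ D
       \<and> (\<forall>k < 2 ^ D.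
            fst (cell_vertices D x) ! k = (\<Sum>d<D. bit_d d k * 2 ^ d)
          \<and> snd (cell_vertices D x) ! k =
              (\<Prod>d<D. (1 - real (bit_d d k)) * (1 - x d) + real (bit_d d k) * x d))"
  by (simp add: main)

end
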